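(* For all integers $s\ge2$ and $m\ge s+1$, the tight cycle $C_m^{(s)}$ is edge-balanced.
   Context: The tight cycle $C_m^{(s)}$ is the $s$-uniform hypergraph with vertices $v_1,\dots,v_m$ in cyclic order and the $m$ edges $\{v_i,v_{i+1},\dots,v_{i+s-1}\}$, $i=1,\dots,m$, indices modulo $m$. For an $s$-graph $F$ with $v_F$ vertices and $e_F\ge1$ edges, $g(F)=1/s$ if $e_F=1$ and $g(F)=\frac{e_F-1}{v_F-s}$ if $e_F>1$. $F$ is edge-balanced if every sub-hypergraph $F'\subseteq F$ with $e_{F'}>0$ satisfies $g(F')\le g(F)$. *)

theory Defs
  imports Complex_Main
begin

definition tight_cycle_vertices :: "nat \<Rightarrow> nat set" where
  "tight_cycle_vertices m = {..<m}"

definition tight_cycle_edges :: "nat \<Rightarrow> nat \<Rightarrow> nat set set" where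
  "tight_cycle_edges s m = {(\<lambda>j. (i + j) mod m) ` {..<s} | i. i < m}"

definition g_density :: "nat \<Rightarrow> 'a set \<Rightarrow> 'a set set \<Rightarrow> real" where
  "g_density s V E =
     (if card E = 1 then 1 / real s
      else (real (card E) - 1) / (real (card V) - real s))"

definition sub_hypergraph :: "'a set \<Rightarrow> 'a set set \<Rightarrow> 'a set \<Rightarrow> 'a set set \<Rightarrow> bool" where
  "sub_hypergraph V' E' V E \<longleftrightarrow> V' \<subseteq> V \<and> E' \<subseteq> E \<and> (\<forall>e\<in>E'. e \<subseteq> V')"

definition edge_balanced :: "nat \<Rightarrow> 'a set \<Rightarrow> 'a set set \<Rightarrow> bool" where
  "edge_balanced s V E \<longleftrightarrow>
     (\<forall>V' E'. sub_hypergraph V' E' V E \<and> card E' > 0 \<longrightarrow> g_density s V' E' \<le> g_density s V E)"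

end

theory Submission
  imports Defs
begin

lemma starts_bound:
  fixes W :: "nat set"
  assumes "finite W" "s \<ge> 1" "{a. {a..<a+s} \<subseteq> W} \<noteq> {}"
  shows "card {a. {a..<a+s} \<subseteq> W} + s \<le> card W + 1"
  using assms
proof (induction "card W" arbitrary: W rule: less_induct)
  case less
  define S where "S = (\<lambda>W. {a. {a..<a+s} \<subseteq> W})"
  have SW: "S W' \<subseteq> W'" for W'
    using less.prems(2) unfolding S_def by auto
  have ne: "W \<noteq> {}" using less.prems(3) SW[of W] unfolding S_def by auto
  define M where "M = Max W"
  have MW: "M \<in> W" using ne less.prems(1) M_def by simp
  have Mmax: "z \<in> W \<Longrightarrow> z \<le> M" for z using less.prems(1) M_def by simp
  define W' where "W' = W - {M}"
  have cW': "card W' + 1 = card W" using MW less.prems(1) W'_def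
    using card.remove[OF less.prems(1) MW] by simp
  have sub: "S W \<subseteq> S W' \<union> {M + 1 - s}"
  proof
    fix a assume a: "a \<in> S W"
    then have int: "{a..<a+s} \<subseteq> W" unfolding S_def by auto
    have "a + s - 1 \<in> W" using int less.prems(2) by auto
    then have le: "a + s - 1 \<le> M" using Mmax by auto
    show "a \<in> S W' \<union> {M + 1 - s}"
    proof (cases "a + s - 1 = M")
      case True then show ?thesis using less.prems(2) by auto
    next
      case False
      then have "{a..<a+s} \<subseteq> W'" using int le W'_def by auto
      then show ?thesis unfolding S_def by auto
    qed
  qed
  have finW': "finite W'" using less.prems(1) W'_def by auto
  have finS': "finite (S W')" using SW[of W'] finW' finite_subset by blast
  show ?case
  proof (cases "S W' = {}")
    case True
    then have "S W \<subseteq> {M + 1 - s}" using sub by auto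
    then have c1: "card (S W) \<le> 1" using card_mono[of "{M + 1 - s}" "S W"] by simp
    obtain a where "{a..<a+s} \<subseteq> W" using less.prems(3) by auto
    then have "card {a..<a+s} \<le> card W" using less.prems(1) card_mono by blast
    then have "s \<le> card W" by simp
    then show ?thesis using c1 unfolding S_def by simp
  next
    case False
    have "card W' < card W" using cW' by simp
    then have IH: "card (S W') + s \<le> card W' + 1"
      using less.hyps[of W'] finW' less.prems(2) False unfolding S_def by blast
    have "card (S W) \<le> card (S W' \<union> {M + 1 - s})"
      using sub finS' by (intro card_mono) auto
    also have "\<dots> \<le> card (S W') + 1" using finS'
      using card_Un_le[of "S W'" "{M + 1 - s}"] by simp
    finally show ?thesis using IH cW' unfolding S_def by simp
  qed
qed


lemma rot_inj:
  fixes m c :: nat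
  shows "inj_on (\<lambda>v. (v + c) mod m) {..<m}"
proof (rule inj_onI)
  fix v w assume v: "v \<in> {..<m}" and w: "w \<in> {..<m}" and eq: "(v + c) mod m = (w + c) mod m"
  have bk: "((u + c) mod m + (m - c mod m)) mod m = u" if "u < m" for u
  proof -
    have m0: "m > 0" using that by simp
    have "((u + c) mod m + (m - c mod m)) mod m = (u + c + (m - c mod m)) mod m"
      by (simp add: mod_simps)
    also have "u + c + (m - c mod m) = (u + c div m * m) + m"
      using m0 div_mult_mod_eq[of c m] mod_less_divisor[OF m0, of c] by linarith
    also have "((u + c div m * m) + m) mod m = u" using that by simp
    finally show ?thesis .
  qed
  have "v = ((v + c) mod m + (m - c mod m)) mod m" using bk[of v] v by simp
  also have "\<dots> = ((w + c) mod m + (m - c mod m)) mod m" using eq by (rule arg_cong)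
  also have "\<dots> = w" using bk[of w] w by simp
  finally show "v = w" .
qed

lemma avoid_bound:
  fixes s m x :: nat and V' :: "nat set" and E' :: "nat set set"
  assumes xm: "x < m" and xV: "x \<notin> V'" and Vm: "V' \<subseteq> {..<m}"
    and EE: "E' \<subseteq> tight_cycle_edges s m" and eV: "\<forall>e\<in>E'. e \<subseteq> V'"
    and ne: "E' \<noteq> {}" and s1: "s \<ge> 1"
  shows "card E' + s \<le> card V' + 1"
proof -
  define c where "c = m - x - 1"
  define \<rho> where "\<rho> = (\<lambda>v. (v + c) mod m)"
  have inj: "inj_on \<rho> {..<m}" unfolding \<rho>_def by (rule rot_inj)
  have rx: "\<rho> x = m - 1" using xm unfolding \<rho>_def c_def by simp
  define W where "W = \<rho> ` V'"
  have finV: "finite V'" using Vm finite_subset by blast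
  have cW: "card W = card V'" unfolding W_def using inj Vm card_image inj_on_subset by blast
  have finW: "finite W" using finV W_def by simp
  define S where "S = {a. {a..<a+s} \<subseteq> W}"
  have key: "\<exists>a\<in>S. \<rho> ` e = {a..<a+s}" if eE: "e \<in> E'" for e
  proof -
    obtain i where i: "i < m" and e: "e = (\<lambda>j. (i + j) mod m) ` {..<s}"
      using EE eE unfolding tight_cycle_edges_def by auto
    define a where "a = (i + c) mod m"
    have am: "a < m" using i unfolding a_def by simp
    have img: "\<rho> ` e = (\<lambda>j. (a + j) mod m) ` {..<s}"
      unfolding e image_image \<rho>_def a_def
      by (rule image_cong) (simp_all add: mod_simps add.commute add.left_commute)
    have "a + s \<le> m - 1"
    proof (rule ccontr)
      assume "\<not> a + s \<le> m - 1"
      define j where "j = m - 1 - a"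
      have js: "j < s" using \<open>\<not> a + s \<le> m - 1\<close> am unfolding j_def by simp
      have "(a + j) mod m = m - 1" using am unfolding j_def by simp
      moreover have "\<rho> ((i + j) mod m) = (a + j) mod m"
        unfolding \<rho>_def a_def by (simp add: mod_simps add.commute add.left_commute)
      ultimately have "\<rho> ((i + j) mod m) = \<rho> x" using rx by simp
      then have "(i + j) mod m = x" using inj xm i by (simp add: inj_on_eq_iff)
      then have "x \<in> e" using e js by auto
      then show False using eE eV xV by auto
    qed
    then have img2: "\<rho> ` e = {a..<a+s}"
      unfolding img
    proof -
      assume as: "a + s \<le> m - 1"
      have "(\<lambda>j. (a + j) mod m) ` {..<s} = (\<lambda>j. a + j) ` {..<s}"
        by (rule image_cong) (use as in auto)
      also have "\<dots> = {a..<a+s}"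
        using image_add_atLeastLessThan[of a 0 s] by (simp add: lessThan_atLeast0 add.commute)
      finally show "(\<lambda>j. (a + j) mod m) ` {..<s} = {a..<a+s}" .
    qed
    have "e \<subseteq> V'" using eE eV by blast
    then have "\<rho> ` e \<subseteq> W" unfolding W_def by (rule image_mono)
    then have "{a..<a+s} \<subseteq> W" using img2 by simp
    then show ?thesis using img2 unfolding S_def by auto
  qed
  have finS: "finite S"
  proof -
    have "S \<subseteq> W" unfolding S_def using s1 by auto
    then show ?thesis using finW finite_subset by blast
  qed
  have Sne: "S \<noteq> {}" using key ne by blast
  have sub: "(image \<rho>) ` E' \<subseteq> (\<lambda>a. {a..<a+s}) ` S" using key by blast
  have injE: "inj_on (image \<rho>) E'"
  proof (rule inj_onI)
    fix e f assume "e \<in> E'" "f \<in> E'" "\<rho> ` e = \<rho> ` f"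
    moreover have "e \<subseteq> {..<m}" "f \<subseteq> {..<m}" using \<open>e \<in> E'\<close> \<open>f \<in> E'\<close> eV Vm by auto
    ultimately show "e = f" using inj_on_image_eq_iff[OF inj] by blast
  qed
  have "card E' = card ((image \<rho>) ` E')" using card_image[OF injE] by simp
  also have "\<dots> \<le> card ((\<lambda>a. {a..<a+s}) ` S)" using sub finS by (intro card_mono) auto
  also have "\<dots> \<le> card S" by (rule card_image_le[OF finS])
  finally have "card E' \<le> card S" .
  moreover have "card S + s \<le> card W + 1"
    using starts_bound[OF finW s1] Sne unfolding S_def by blast
  ultimately show ?thesis using cW by simp
qed


theorem claim21:
  fixes s m :: nat
  assumes "s \<ge> 2" and "m \<ge> s + 1"
  shows "edge_balanced s (tight_cycle_vertices m) (tight_cycle_edges s m)"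
proof -
  define E where "E = tight_cycle_edges s m"
  define V where "V = tight_cycle_vertices m"
  have s1: "s \<ge> 1" using assms by simp
  have finE: "finite E" unfolding E_def tight_cycle_edges_def
    by (rule finite_image_set) simp
  have cV: "card V = m" unfolding V_def tight_cycle_vertices_def by simp
  have sub: "(\<lambda>a. {a..<a+s}) ` {..m-s} \<subseteq> E"
  proof
    fix X assume "X \<in> (\<lambda>a. {a..<a+s}) ` {..m-s}"
    then obtain a where a: "a \<le> m - s" and X: "X = {a..<a+s}" by auto
    have "(\<lambda>j. (a + j) mod m) ` {..<s} = (\<lambda>j. a + j) ` {..<s}"
      by (rule image_cong) (use a assms in auto)
    also have "\<dots> = {a..<a+s}"
      using image_add_atLeastLessThan[of a 0 s] by (simp add: lessThan_atLeast0 add.commute)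
    finally have "X = (\<lambda>j. (a + j) mod m) ` {..<s}" using X by simp
    moreover have "a < m" using a assms by simp
    ultimately show "X \<in> E" unfolding E_def tight_cycle_edges_def by blast
  qed
  have injI: "inj_on (\<lambda>a. {a..<a+s}) {..m-s}"
  proof (rule inj_onI)
    fix a b assume ab: "{a..<a+s} = {b..<b+s}"
    have "a \<in> {a..<a+s}" "b \<in> {b..<b+s}" using s1 by auto
    then have "a \<in> {b..<b+s}" "b \<in> {a..<a+s}" using ab by simp_all
    then show "a = b" by simp
  qed
  have cEge: "card E \<ge> m - s + 1"
  proof -
    have "card ((\<lambda>a. {a..<a+s}) ` {..m-s}) = m - s + 1" using card_image[OF injI] by simp
    moreover have "card ((\<lambda>a. {a..<a+s}) ` {..m-s}) \<le> card E" using card_mono[OF finE sub] .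
    ultimately show ?thesis by simp
  qed
  have ms: "real m - real s > 0" using assms by simp
  show ?thesis
    unfolding edge_balanced_def E_def[symmetric] V_def[symmetric]
  proof (intro allI impI, elim conjE)
    fix V' E' assume sh: "sub_hypergraph V' E' V E" and cpos: "0 < card E'"
    have VV: "V' \<subseteq> V" and EE: "E' \<subseteq> E" and eV: "\<forall>e\<in>E'. e \<subseteq> V'"
      using sh unfolding sub_hypergraph_def by auto
    have finE': "finite E'" using cpos card_gt_0_iff by blast
    have ne: "E' \<noteq> {}" using cpos by auto
    have cEE: "card E' \<le> card E" using card_mono[OF finE EE] .
    have gC: "card E \<noteq> 1 \<Longrightarrow> g_density s V E = (real (card E) - 1) / (real m - real s)"
      unfolding g_density_def using cV by simp
    have gC1: "g_density s V E \<ge> 1" if "card E \<noteq> 1"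
    proof -
      have "real (card E) - 1 \<ge> real m - real s" using cEge assms by linarith
      then show ?thesis using gC[OF that] ms by simp
    qed
    show "g_density s V' E' \<le> g_density s V E"
    proof (cases "card E' = 1")
      case True
      then have g': "g_density s V' E' = 1 / real s" unfolding g_density_def by simp
      show ?thesis
      proof (cases "card E = 1")
        case True then show ?thesis using g' unfolding g_density_def by simp
      next
        case False
        have "1 / real s \<le> 1" using s1 by simp
        then show ?thesis using g' gC1[OF False] by linarith
      qed
    next
      case False
      then have e2: "card E' \<ge> 2" using cpos by simp
      then have cE1: "card E \<noteq> 1" using cEE by simp
      have g': "g_density s V' E' = (real (card E') - 1) / (real (card V') - real s)"
        unfolding g_density_def using False by simp
      show ?thesis
      proof (cases "V' = V")
        case True
        have "(real (card E') - 1) / (real m - real s) \<le> (real (card E) - 1) / (real m - real s)"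
          using cEE ms by (intro divide_right_mono) auto
        then show ?thesis using g' gC[OF cE1] True cV by simp
      next
        case False
        then obtain x where x: "x \<in> V" "x \<notin> V'" using VV by blast
        have xm: "x < m" using x V_def tight_cycle_vertices_def by simp
        have Vm: "V' \<subseteq> {..<m}" using VV V_def tight_cycle_vertices_def by simp
        have bd: "card E' + s \<le> card V' + 1"
          using avoid_bound[OF xm x(2) Vm _ eV ne s1] EE E_def by blast
        have num: "real (card E') - 1 \<le> real (card V') - real s" using bd by linarith
        have pos: "real (card V') - real s > 0" using bd e2 by linarith
        have "g_density s V' E' \<le> 1" using g' num pos by simp
        then show ?thesis using gC1[OF cE1] by linarith
      qed
    qed
  qed
qed

end
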